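(* Let $\sigma>0$, $a>0$, $m\in\mathbb R$, and $u_0(x)=\sqrt{\frac{a}{2\pi}}e^{-\frac a2(x-m)^2}$. Then the solution $u$ of $$\partial_t u=\sigma^2\partial_{xx}u+\Big(x^2-\int_{\mathbb R}y^2u(t,y)\,dy\Big)u,\quad x\in\mathbb R,\qquad u(0,\cdot)=u_0,$$ remains Gaussian for $0<t<T:=\frac{\arctan(a\sigma)}{2\sigma}$ and is given by $$u(t,x)=\sqrt{\frac{a(t)}{2\pi}}e^{-\frac{a(t)}{2}(x-m(t))^2},\quad a(t):=\frac{a\sigma-\tan(2\sigma t)}{\sigma(1+a\sigma\tan(2\sigma t))},\quad m(t):=\frac{ma\sigma}{a\sigma\cos(2\sigma t)-\sin(2\sigma t)}.$$
   Context: The solution of the equation is understood to exist as long as the nonlocal term $\int_{\mathbb R}x^2u(t,x)\,dx$ is finite. *)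

theory Defs
  imports "HOL-Analysis.Analysis"
begin

definition gauss :: "real \<Rightarrow> real \<Rightarrow> real \<Rightarrow> real" where
  "gauss p c x = sqrt (p / (2 * pi)) * exp (- (p / 2) * (x - c)^2)"

definition prec_t :: "real \<Rightarrow> real \<Rightarrow> real \<Rightarrow> real" where
  "prec_t \<sigma> a t = (a * \<sigma> - tan (2 * \<sigma> * t)) / (\<sigma> * (1 + a * \<sigma> * tan (2 * \<sigma> * t)))"

definition mean_t :: "real \<Rightarrow> real \<Rightarrow> real \<Rightarrow> real \<Rightarrow> real" where
  "mean_t \<sigma> a m t = m * a * \<sigma> / (a * \<sigma> * cos (2 * \<sigma> * t) - sin (2 * \<sigma> * t))"

end

theory Submission
  imports Defs "HOL-Probability.Distributions"
begin

lemma gauss_normal: "A > 0 \<Longrightarrow> gauss A M y = normal_density M (1 / sqrt A) y"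
  unfolding gauss_def normal_density_def
  by (simp add: power_divide real_sqrt_divide field_simps)

lemma gauss_moment2:
  assumes A: "A > 0"
  shows "((\<lambda>y. y^2 * gauss A M y) has_integral (1/A + M^2)) UNIV"
proof -
  define s where "s = 1 / sqrt A"
  have s: "s > 0" using A by (simp add: s_def)
  have s2: "s^2 = 1/A" using A by (simp add: s_def power_divide)
  have h2: "has_bochner_integral lborel (\<lambda>y. normal_density M s y * (y - M)^2) (1/A)"
    using normal_moment_even[OF s, of M 1] s2 by simp
  have h1: "has_bochner_integral lborel (\<lambda>y. 2 * M * (normal_density M s y * (y - M)^1)) 0"
    using has_bochner_integral_mult_right[OF normal_moment_odd[OF s, of M 0], of "2*M"] by simp
  have h0: "has_bochner_integral lborel (\<lambda>y. M^2 * normal_density M s y) (M^2)"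
    using has_bochner_integral_mult_right[OF has_bochner_integral_integrable[OF integrable_normal_density[where \<mu>=M and \<sigma>=s]], of "M^2"]
    using integral_normal_density[OF s, of M] s by simp
  have "has_bochner_integral lborel (\<lambda>y. normal_density M s y * (y - M)^2 + 2 * M * (normal_density M s y * (y - M)^1) + M^2 * normal_density M s y) (1/A + 0 + M^2)"
    by (intro has_bochner_integral_add h0 h1 h2)
  moreover have "\<And>y. normal_density M s y * (y - M)^2 + 2 * M * (normal_density M s y * (y - M)^1) + M^2 * normal_density M s y = y^2 * gauss A M y"
    using A by (simp add: gauss_normal s_def power2_eq_square algebra_simps)
  ultimately have hb: "has_bochner_integral lborel (\<lambda>y. y^2 * gauss A M y) (1/A + M^2)" by simp
  show ?thesis
    using has_integral_integral_lborel[OF integrable.intros[OF hb]]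
      has_bochner_integral_integral_eq[OF hb] by simp
qed

lemma gauss_time_deriv:
  assumes dA: "(Af has_real_derivative A') (at t)" and dM: "(Mf has_real_derivative M') (at t)" and pos: "Af t > 0"
  shows "((\<lambda>s. gauss (Af s) (Mf s) x) has_real_derivative
     gauss (Af t) (Mf t) x * (A'/(2*Af t) - A'/2*(x - Mf t)^2 + Af t * M' * (x - Mf t))) (at t)"
proof -
  define q where "q = sqrt (Af t / (2*pi))"
  have q: "q > 0" "q^2 = Af t / (2*pi)" using pos by (auto simp: q_def)
  have d0: "((\<lambda>s. sqrt (Af s/(2*pi))) has_real_derivative inverse (sqrt (Af t/(2*pi))) / 2 * (A'/(2*pi))) (at t)"
    by (rule DERIV_chain2[OF DERIV_real_sqrt]) (use pos dA in \<open>auto intro!: derivative_eq_intros\<close>)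
  have d1: "((\<lambda>s. sqrt (Af s/(2*pi))) has_real_derivative (A'/(2*pi)) / (2*q)) (at t)"
    using d0 unfolding q_def by (simp add: field_simps)
  define E where "E = (\<lambda>s. - (Af s / 2) * (x - Mf s)^2)"
  have d2: "(E has_real_derivative (- (A'/2) * (x - Mf t)^2 - (Af t/2) * (2 * (x - Mf t) * (- M')))) (at t)"
    unfolding E_def
    by (rule derivative_eq_intros dA dM refl | simp)+
  have d3: "((\<lambda>s. exp (E s)) has_real_derivative exp (E t) * (- (A'/2) * (x - Mf t)^2 - (Af t/2) * (2 * (x - Mf t) * (- M')))) (at t)"
    by (rule DERIV_chain2[OF DERIV_exp d2])
  have d: "((\<lambda>s. sqrt (Af s/(2*pi)) * exp (E s)) has_real_derivative
     (A'/(2*pi)) / (2*q) * exp (E t) + (exp (E t) * (- (A'/2) * (x - Mf t)^2 - (Af t/2) * (2 * (x - Mf t) * (- M')))) * sqrt (Af t/(2*pi))) (at t)"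
    using DERIV_mult[OF d1 d3] .
  have eq: "(A'/(2*pi)) / (2*q) = q * (A'/(2*Af t))"
    using q pos by (simp add: field_simps power2_eq_square)
  have fe: "(\<lambda>s. sqrt (Af s/(2*pi)) * exp (E s)) = (\<lambda>s. gauss (Af s) (Mf s) x)"
    by (simp add: gauss_def E_def fun_eq_iff)
  have ge: "gauss (Af t) (Mf t) x = q * exp (E t)" by (simp add: gauss_def E_def q_def)
  show ?thesis
    apply (rule DERIV_cong[OF d[unfolded fe]])
    unfolding ge eq q_def[symmetric]
    by (simp add: algebra_simps power2_eq_square)
qed


lemma dtan:
  assumes c: "cos (2*\<sigma>*t) \<noteq> 0"
  shows "((\<lambda>r. tan (2*\<sigma>*r)) has_real_derivative 2*\<sigma>*(1 + (tan (2*\<sigma>*t))^2)) (at t)"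
proof -
  have "((\<lambda>r. tan (2*\<sigma>*r)) has_real_derivative inverse ((cos (2*\<sigma>*t))^2) * (2*\<sigma>)) (at t)"
    by (rule DERIV_chain2[where f=tan and g="\<lambda>r. 2*\<sigma>*r", OF DERIV_tan[OF c]]) (auto intro!: derivative_eq_intros)
  moreover have "inverse ((cos (2*\<sigma>*t))^2) = 1 + (tan (2*\<sigma>*t))^2"
    using c sin_cos_squared_add[of "2*\<sigma>*t"] by (simp add: tan_def field_simps)
  ultimately show ?thesis by (simp add: mult.commute)
qed

lemma prec_alg:
  assumes s: "(\<sigma>::real) > 0" and d: "1 + a*\<sigma>*\<tau> \<noteq> 0"
  shows "((- (2*\<sigma>*(1+\<tau>^2))) * (\<sigma> * (1 + a*\<sigma>*\<tau>)) - (a*\<sigma> - \<tau>) * (\<sigma> * (a*\<sigma>*(2*\<sigma>*(1+\<tau>^2))))) /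
     ((\<sigma> * (1 + a*\<sigma>*\<tau>)) * (\<sigma> * (1 + a*\<sigma>*\<tau>)))
   = -2*(1+\<sigma>^2*((a*\<sigma> - \<tau>) / (\<sigma> * (1 + a*\<sigma>*\<tau>)))^2)"
proof -
  define K where "K = \<sigma> * (1 + a*\<sigma>*\<tau>)"
  have K: "K \<noteq> 0" using s d by (simp add: K_def)
  have "-2*(1+\<sigma>^2*((a*\<sigma> - \<tau>) / K)^2) = -2*(K^2+\<sigma>^2*(a*\<sigma> - \<tau>)^2) / K^2"
    using K by (simp add: field_simps)
  moreover have "((- (2*\<sigma>*(1+\<tau>^2))) * K - (a*\<sigma> - \<tau>) * (\<sigma> * (a*\<sigma>*(2*\<sigma>*(1+\<tau>^2))))) = -2*(K^2+\<sigma>^2*(a*\<sigma> - \<tau>)^2)"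
    unfolding K_def by algebra
  ultimately show ?thesis unfolding K_def[symmetric] by (simp add: power2_eq_square)
qed
lemma prec_deriv:
  assumes s: "\<sigma> > 0" and c: "cos (2*\<sigma>*t) \<noteq> 0" and d: "1 + a*\<sigma>*tan (2*\<sigma>*t) \<noteq> 0"
  shows "(prec_t \<sigma> a has_real_derivative -2*(1+\<sigma>^2*(prec_t \<sigma> a t)^2)) (at t)"
proof -
  note dt = dtan[OF c]
  have n: "((\<lambda>r. a*\<sigma> - tan (2*\<sigma>*r)) has_real_derivative - (2*\<sigma>*(1 + (tan (2*\<sigma>*t))^2))) (at t)"
    using DERIV_diff[OF DERIV_const dt] by simp
  have dd: "((\<lambda>r. \<sigma> * (1 + a*\<sigma>*tan (2*\<sigma>*r))) has_real_derivative \<sigma> * (a*\<sigma>*(2*\<sigma>*(1 + (tan (2*\<sigma>*t))^2)))) (at t)"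
    using DERIV_cmult[OF DERIV_add[OF DERIV_const DERIV_cmult[OF dt]], of \<sigma> 1 "a*\<sigma>"] by simp
  have "(prec_t \<sigma> a has_real_derivative ((- (2*\<sigma>*(1+(tan (2*\<sigma>*t))^2))) * (\<sigma> * (1 + a*\<sigma>*tan (2*\<sigma>*t))) - (a*\<sigma> - tan (2*\<sigma>*t)) * (\<sigma> * (a*\<sigma>*(2*\<sigma>*(1+(tan (2*\<sigma>*t))^2))))) /
     ((\<sigma> * (1 + a*\<sigma>*tan (2*\<sigma>*t))) * (\<sigma> * (1 + a*\<sigma>*tan (2*\<sigma>*t))))) (at t)"
    unfolding prec_t_def[abs_def]
    by (rule DERIV_divide[OF n dd]) (use s d in simp)
  then show ?thesis
    using prec_alg[OF s d] unfolding prec_t_def by simp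
qed

lemma mean_alg:
  assumes c: "(c::real) \<noteq> 0" and d: "a*\<sigma>*c - sn \<noteq> 0" and s: "\<sigma> > 0"
    and e: "1 + a*\<sigma>*(sn/c) \<noteq> 0"
  shows "(0 * (a*\<sigma>*c - sn) - m*a*\<sigma> * (-(2*\<sigma>)*(a*\<sigma>* sn + c))) / ((a*\<sigma>*c - sn) * (a*\<sigma>*c - sn))
    = 2 * (m*a*\<sigma> / (a*\<sigma>*c - sn)) / ((a*\<sigma> - sn/c) / (\<sigma> * (1 + a*\<sigma>*(sn/c))))"
proof -
  have e2: "c + a*\<sigma>* sn \<noteq> 0" using e c by (simp add: field_simps)
  have "(a*\<sigma> - sn/c) / (\<sigma> * (1 + a*\<sigma>*(sn/c))) = (a*\<sigma>*c - sn) / (\<sigma> * (c + a*\<sigma>* sn))"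
  proof -
    have 1: "a*\<sigma> - sn/c = (a*\<sigma>*c - sn)/c" using c by (simp add: field_simps)
    have 2: "\<sigma> * (1 + a*\<sigma>*(sn/c)) = (\<sigma> * (c + a*\<sigma>* sn))/c" using c by (simp add: field_simps)
    show ?thesis unfolding 1 2 using c by simp
  qed
  then show ?thesis using d e2 s by (simp add: field_simps)
qed

lemma mean_deriv:
  assumes s: "\<sigma> > 0" and c: "cos (2*\<sigma>*t) \<noteq> 0" and d: "a*\<sigma>* cos (2*\<sigma>*t) - sin (2*\<sigma>*t) \<noteq> 0"
    and e: "1 + a*\<sigma>*tan (2*\<sigma>*t) \<noteq> 0"
  shows "(mean_t \<sigma> a m has_real_derivative 2 * mean_t \<sigma> a m t / prec_t \<sigma> a t) (at t)"
proof -
  have dD: "((\<lambda>r. a*\<sigma>* cos (2*\<sigma>*r) - sin (2*\<sigma>*r)) has_real_derivative -(2*\<sigma>)*(a*\<sigma>* sin (2*\<sigma>*t) + cos (2*\<sigma>*t))) (at t)"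
    apply (rule DERIV_cong)
     apply (rule derivative_eq_intros refl)+
    apply (simp add: algebra_simps)
    done
  have "(mean_t \<sigma> a m has_real_derivative (0 * (a*\<sigma>* cos (2*\<sigma>*t) - sin (2*\<sigma>*t)) - m*a*\<sigma> * (-(2*\<sigma>)*(a*\<sigma>* sin (2*\<sigma>*t) + cos (2*\<sigma>*t)))) / ((a*\<sigma>* cos (2*\<sigma>*t) - sin (2*\<sigma>*t)) * (a*\<sigma>* cos (2*\<sigma>*t) - sin (2*\<sigma>*t)))) (at t)"
    unfolding mean_t_def[abs_def]
    by (rule DERIV_divide[OF DERIV_const dD]) (use d in simp)
  moreover have "a*\<sigma> - sin (2*\<sigma>*t) / cos (2*\<sigma>*t) \<noteq> 0"
    using c d by (simp add: field_simps)
  ultimately show ?thesis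
    using mean_alg[OF c d s, of m] e unfolding mean_t_def prec_t_def tan_def by simp
qed

lemma gauss_x_deriv: "((\<lambda>z. gauss A M z) has_real_derivative gauss A M y * (-A*(y-M))) (at y)"
  unfolding gauss_def
  apply (rule DERIV_cong)
   apply (rule derivative_eq_intros refl)+
  apply (simp add: algebra_simps)
  done


theorem proposition3p2:
  fixes \<sigma> a m :: real and u :: "real \<Rightarrow> real \<Rightarrow> real"
  assumes "\<sigma> > 0" and "a > 0"
    and u_def: "\<And>t x. u t x = gauss (prec_t \<sigma> a t) (mean_t \<sigma> a m t) x"
  defines "T \<equiv> arctan (a * \<sigma>) / (2 * \<sigma>)"
  shows "(\<forall>x. u 0 x = gauss a m x)
    \<and> (\<forall>x. ((\<lambda>s. u s x) \<longlongrightarrow> gauss a m x) (at_right 0))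
    \<and> (\<forall>t\<in>{0<..<T}. prec_t \<sigma> a t > 0
        \<and> (\<lambda>y. y^2 * u t y) integrable_on UNIV
        \<and> (\<forall>x. \<exists>ux uxx.
              (\<forall>y. ((\<lambda>z. u t z) has_real_derivative ux y) (at y))
            \<and> (ux has_real_derivative uxx) (at x)
            \<and> ((\<lambda>s. u s x) has_real_derivative
                  (\<sigma>^2 * uxx + (x^2 - integral UNIV (\<lambda>y. y^2 * u t y)) * u t x)) (at t)))"
proof -
  have s: "\<sigma> > 0" and a: "a > 0" using assms by auto
  have ufun: "\<And>t. (\<lambda>z. u t z) = gauss (prec_t \<sigma> a t) (mean_t \<sigma> a m t)" by (simp add: u_def fun_eq_iff)
  have ufun2: "\<And>x. (\<lambda>s. u s x) = (\<lambda>s. gauss (prec_t \<sigma> a s) (mean_t \<sigma> a m s) x)" by (simp add: u_def fun_eq_iff)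
  have p0: "prec_t \<sigma> a 0 = a" and m0: "mean_t \<sigma> a m 0 = m"
    using s a by (simp_all add: prec_t_def mean_t_def)
  have tderiv: "((\<lambda>s. u s x) has_real_derivative
      u t x * (-2*(1+\<sigma>^2*(prec_t \<sigma> a t)^2)/(2*prec_t \<sigma> a t) - -2*(1+\<sigma>^2*(prec_t \<sigma> a t)^2)/2*(x - mean_t \<sigma> a m t)^2
         + prec_t \<sigma> a t * (2 * mean_t \<sigma> a m t / prec_t \<sigma> a t) * (x - mean_t \<sigma> a m t))) (at t)"
    if c: "cos (2*\<sigma>*t) \<noteq> 0" and d: "a*\<sigma>* cos (2*\<sigma>*t) - sin (2*\<sigma>*t) \<noteq> 0"
      and e: "1 + a*\<sigma>*tan (2*\<sigma>*t) \<noteq> 0" and p: "prec_t \<sigma> a t > 0" for t x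
    unfolding ufun2 u_def
    by (rule gauss_time_deriv[OF prec_deriv[OF s c e] mean_deriv[OF s c d e] p])
  have part1: "\<forall>x. u 0 x = gauss a m x" by (simp add: u_def p0 m0)
  have part2: "\<forall>x. ((\<lambda>s. u s x) \<longlongrightarrow> gauss a m x) (at_right 0)"
  proof
    fix x
    have "isCont (\<lambda>s. u s x) 0"
      by (rule DERIV_isCont[OF tderiv]) (use s a in \<open>simp_all add: p0\<close>)
    then have "continuous (at 0 within {0<..}) (\<lambda>s. u s x)"
      by (rule continuous_at_imp_continuous_at_within)
    then show "((\<lambda>s. u s x) \<longlongrightarrow> gauss a m x) (at_right 0)"
      using part1 by (simp add: continuous_within)
  qed
  have part3: "prec_t \<sigma> a t > 0
        \<and> (\<lambda>y. y^2 * u t y) integrable_on UNIV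
        \<and> (\<forall>x. \<exists>ux uxx.
              (\<forall>y. ((\<lambda>z. u t z) has_real_derivative ux y) (at y))
            \<and> (ux has_real_derivative uxx) (at x)
            \<and> ((\<lambda>s. u s x) has_real_derivative
                  (\<sigma>^2 * uxx + (x^2 - integral UNIV (\<lambda>y. y^2 * u t y)) * u t x)) (at t))"
    if t: "t \<in> {0<..<T}" for t
  proof -
    define \<phi> where "\<phi> = 2*\<sigma>*t"
    have ph0: "0 < \<phi>" using t s by (simp add: \<phi>_def)
    have ph1: "\<phi> < arctan (a*\<sigma>)" using t s by (simp add: \<phi>_def T_def field_simps)
    have ph2: "arctan (a*\<sigma>) < pi/2" by (rule arctan_ubound)
    have c: "cos \<phi> > 0" using ph0 ph1 ph2 by (intro cos_gt_zero_pi) auto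
    have tp: "tan \<phi> > 0" using ph0 ph1 ph2 by (intro tan_gt_zero) auto
    have tl: "tan \<phi> < a*\<sigma>"
      using tan_monotone[of \<phi> "arctan (a*\<sigma>)"] ph0 ph1 ph2 by (simp add: tan_arctan)
    have e: "1 + a*\<sigma>*tan \<phi> > 0" using tp a s by (simp add: add_pos_pos)
    have pp: "prec_t \<sigma> a t > 0" using tl e s unfolding prec_t_def \<phi>_def[symmetric]
      by (intro divide_pos_pos) auto
    have dd: "a*\<sigma>* cos \<phi> - sin \<phi> = cos \<phi> * (a*\<sigma> - tan \<phi>)"
      using c by (simp add: tan_def field_simps)
    have d: "a*\<sigma>* cos \<phi> - sin \<phi> > 0" unfolding dd using c tl by simp
    define A where "A = prec_t \<sigma> a t"
    define M where "M = mean_t \<sigma> a m t"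
    have A: "A > 0" using pp by (simp add: A_def)
    have hi: "((\<lambda>y. y^2 * u t y) has_integral (1/A + M^2)) UNIV"
      unfolding u_def A_def M_def using gauss_moment2[OF pp] .
    have I: "integral UNIV (\<lambda>y. y^2 * u t y) = 1/A + M^2" using hi by (rule integral_unique)
    show ?thesis
    proof (intro conjI allI)
      show "prec_t \<sigma> a t > 0" by (rule pp)
      show "(\<lambda>y. y^2 * u t y) integrable_on UNIV" using hi by blast
      fix x
      define ux where "ux = (\<lambda>y. u t y * (-A*(y-M)))"
      define uxx where "uxx = u t x * (A^2*(x-M)^2 - A)"
      have h1: "\<forall>y. ((\<lambda>z. u t z) has_real_derivative ux y) (at y)"
        unfolding ufun ux_def u_def A_def M_def using gauss_x_deriv by blast
      have h2: "(ux has_real_derivative uxx) (at x)"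
      proof -
        have dg: "((\<lambda>z. u t z) has_real_derivative u t x * (-A*(x-M))) (at x)"
          using h1 unfolding ux_def by blast
        have "(ux has_real_derivative (u t x * (-A*(x-M))) * (-A*(x-M)) + (-A) * u t x) (at x)"
          unfolding ux_def
          by (rule DERIV_mult[OF dg]) (auto intro!: derivative_eq_intros)
        then show ?thesis unfolding uxx_def
          by (rule DERIV_cong) (simp add: algebra_simps power2_eq_square)
      qed
      have h3: "((\<lambda>s. u s x) has_real_derivative
                  (\<sigma>^2 * uxx + (x^2 - integral UNIV (\<lambda>y. y^2 * u t y)) * u t x)) (at t)"
        apply (rule DERIV_cong[OF tderiv])
            apply (use c d e pp in \<open>simp_all add: \<phi>_def\<close>)[4]
        unfolding I uxx_def A_def[symmetric] M_def[symmetric]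
        using A by (simp add: field_simps power2_eq_square)
      show "\<exists>ux uxx.
              (\<forall>y. ((\<lambda>z. u t z) has_real_derivative ux y) (at y))
            \<and> (ux has_real_derivative uxx) (at x)
            \<and> ((\<lambda>s. u s x) has_real_derivative
                  (\<sigma>^2 * uxx + (x^2 - integral UNIV (\<lambda>y. y^2 * u t y)) * u t x)) (at t)"
        using h1 h2 h3 by blast
    qed
  qed
  show ?thesis using part1 part2 part3 by blast
qed

end
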